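(* Let $(r_{i,j})_{i\ge 0,\, j\in\mathbb{Z}}$ be the Pascal rhombus, defined by $r_{0,0}=r_{1,-1}=r_{1,0}=r_{1,1}=1$, $r_{0,j}=0$ for $j\neq 0$, $r_{1,j}=0$ for $j\notin\{-1,0,1\}$, and $r_{i,j}=r_{i-1,j-1}+r_{i-1,j}+r_{i-1,j+1}+r_{i-2,j}$ for $i\ge 2$, $j\in\mathbb{Z}$. Then for all integers $i\ge 0$ and $j\ge 0$, $$r_{i,j}=\sum_{m=0}^{\lfloor (i-j)/2\rfloor}\binom{2m+j}{m}F^{(j+2m+1)}_{i-j-2m+1},$$ where $F^{(r)}_{k}$ are the convolved Fibonacci numbers.
   Context: For a positive integer $r$, the convolved Fibonacci numbers $F^{(r)}_{k}$ ($k\ge 1$) are defined by $(1-x-x^2)^{-r}=\sum_{k\ge 0}F^{(r)}_{k+1}x^k$. An empty sum (upper limit negative) equals $0$. *)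

theory Defs
  imports "HOL-Computational_Algebra.Formal_Power_Series"
begin

fun rhombus :: "nat \<Rightarrow> int \<Rightarrow> int" where
  "rhombus 0 j = (if j = 0 then 1 else 0)"
| "rhombus (Suc 0) j = (if j \<in> {-1, 0, 1} then 1 else 0)"
| "rhombus (Suc (Suc i)) j =
     rhombus (Suc i) (j - 1) + rhombus (Suc i) j + rhombus (Suc i) (j + 1) + rhombus i j"

text \<open>Convolved Fibonacci numbers: (1 - x - x^2)^(-r) = sum_{k\<ge>0} F^(r)_(k+1) x^k,
  so F^(r)_k is the (k-1)-th coefficient, for k \<ge> 1.\<close>
definition convFib :: "nat \<Rightarrow> nat \<Rightarrow> rat" where
  "convFib r k = fps_nth ((inverse (1 - fps_X - fps_X ^ 2 :: rat fps)) ^ r) (k - 1)"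

end

theory Submission
  imports Defs
begin

definition DD :: "rat fps" where "DD = 1 - fps_X - fps_X ^ 2"

definition GG :: "nat \<Rightarrow> int \<Rightarrow> rat" where
  "GG r k = (if k < 0 then 0 else fps_nth (inverse DD ^ r) (nat k))"

lemma DD0: "fps_nth DD 0 = 1"
  by (simp add: DD_def)

lemma GG_neg: "k < 0 \<Longrightarrow> GG r k = 0"
  by (simp add: GG_def)

lemma GG_zero: "GG 0 k = (if k = 0 then 1 else 0)"
  by (auto simp: GG_def)

lemma GG_rec: "GG (Suc n) k = GG n k + GG (Suc n) (k - 1) + GG (Suc n) (k - 2)"
proof (cases "k < 0")
  case True then show ?thesis by (simp add: GG_def)
next
  case False
  define Q where "Q = inverse DD ^ Suc n"
  have "Q * DD = inverse DD ^ n"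
    unfolding Q_def using inverse_mult_eq_1[of DD] DD0
    by (simp add: mult.assoc mult.commute mult.left_commute)
  hence "inverse DD ^ n = Q - fps_X * Q - fps_X ^ 2 * Q"
    by (simp add: DD_def algebra_simps)
  hence e: "fps_nth (inverse DD ^ n) (nat k) = fps_nth Q (nat k) - fps_nth (fps_X * Q) (nat k) - fps_nth (fps_X ^ 2 * Q) (nat k)"
    by (simp only: fps_sub_nth)
  show ?thesis
    using False e unfolding GG_def Q_def[symmetric]
    by (auto simp: fps_X_power_mult_nth nat_diff_distrib)
qed


lemma GG_n0: "GG n 0 = 1"
  by (induction n) (simp_all add: GG_zero GG_neg GG_rec[where k=0])

definition cc :: "nat \<Rightarrow> int \<Rightarrow> rat" where
  "cc n j = (if even (int n + j) \<and> 0 \<le> int n + j then of_nat (n choose nat ((int n + j) div 2)) else 0)"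

lemma cc_rec: "cc (Suc n) j = cc n (j - 1) + cc n (j + 1)"
proof -
  define s where "s = int (Suc n) + j"
  have a: "int n + (j - 1) = s - 2" "int n + (j + 1) = s" by (simp_all add: s_def)
  show ?thesis
  proof (cases "even s \<and> 0 \<le> s")
    case False
    then show ?thesis unfolding cc_def s_def[symmetric] a by auto
  next
    case True
    define t where "t = nat (s div 2)"
    have t: "s = 2 * int t" using True by (auto simp: t_def)
    show ?thesis
    proof (cases t)
      case 0 then show ?thesis unfolding cc_def s_def[symmetric] a using t by simp
    next
      case (Suc u)
      have "s - 2 = 2 * int u" using t Suc by simp
      have h: "nat (1 + int u) = Suc u" by simp
      have "2 * int t div 2 = int t" "(2 * int u) div 2 = int u" by simp_all
      then show ?thesis unfolding cc_def s_def[symmetric] a using t Suc \<open>s - 2 = 2 * int u\<close>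
        by (simp add: h del: of_nat_Suc)
    qed
  qed
qed

definition SS :: "nat \<Rightarrow> int \<Rightarrow> rat" where
  "SS i j = (\<Sum>n\<le>i. cc n j * GG (Suc n) (int i - int n))"

lemma SS_ext: assumes "i \<le> N"
  shows "SS i j = (\<Sum>n\<le>N. cc n j * GG (Suc n) (int i - int n))"
  unfolding SS_def
  by (rule sum.mono_neutral_left) (use assms in \<open>auto simp: GG_neg\<close>)


lemma GG_11: "GG 1 1 = 1"
  using GG_rec[of 0 1] by (simp add: GG_zero GG_neg GG_n0)

lemma rhombus_SS: "of_int (rhombus i j) = SS i j"
proof (induction i j rule: rhombus.induct)
  case (1 j)
  show ?case by (auto simp: SS_def cc_def GG_n0 elim!: evenE)
next
  case (2 j)
  have "SS 1 j = cc 0 j * GG 1 1 + cc 1 j * GG 2 0"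
    by (simp add: SS_def numeral_2_eq_2)
  also have "\<dots> = cc 0 j + cc 1 j" using GG_11 by (simp add: GG_n0)
  also have "\<dots> = (if j \<in> {-1, 0, 1} then 1 else 0)"
  proof -
    have "j = -1 \<or> j = 0 \<or> j = 1 \<or> j < -1 \<or> j > 1" by linarith
    then show ?thesis
    proof (elim disjE)
      assume "j > 1"
      have c0: "cc 0 j = 0" using \<open>j > 1\<close> by (auto simp: cc_def elim!: evenE)
      have "cc 1 j = 0"
      proof (cases "even (1 + j)")
        case True
        then obtain k where k: "1 + j = 2 * k" by (rule evenE)
        then have "nat ((1 + j) div 2) = nat k" by simp
        moreover have "nat k > 1" using k \<open>j > 1\<close> by linarith
        ultimately show ?thesis by (simp add: cc_def)
      qed (simp add: cc_def)
      then show ?thesis using c0 \<open>j > 1\<close> by auto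
    qed (auto simp: cc_def)
  qed
  finally show ?case by simp
next
  case (3 i j)
  have A: "(\<Sum>n\<le>Suc (Suc i). cc n j * GG n (int (Suc (Suc i)) - int n))
        = SS (Suc i) (j - 1) + SS (Suc i) (j + 1)"
  proof -
    have "(\<Sum>n\<le>Suc (Suc i). cc n j * GG n (int (Suc (Suc i)) - int n))
       = (\<Sum>n\<le>Suc i. cc (Suc n) j * GG (Suc n) (int (Suc (Suc i)) - int (Suc n))) + cc 0 j * GG 0 (int (Suc (Suc i)))"
      by (rule sum.atMost_Suc_shift[THEN trans]) simp
    also have "\<dots> = (\<Sum>n\<le>Suc i. (cc n (j - 1) + cc n (j + 1)) * GG (Suc n) (int (Suc i) - int n))"
      by (simp add: GG_zero cc_rec add_diff_eq)
    also have "\<dots> = SS (Suc i) (j - 1) + SS (Suc i) (j + 1)"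
      by (simp add: SS_def sum.distrib algebra_simps)
    finally show ?thesis .
  qed
  have "SS (Suc (Suc i)) j = (\<Sum>n\<le>Suc (Suc i). cc n j * GG n (int (Suc (Suc i)) - int n))
      + (\<Sum>n\<le>Suc (Suc i). cc n j * GG (Suc n) (int (Suc i) - int n))
      + (\<Sum>n\<le>Suc (Suc i). cc n j * GG (Suc n) (int i - int n))"
  proof -
    have "\<And>n. GG (Suc n) (int (Suc (Suc i)) - int n) = GG n (int (Suc (Suc i)) - int n)
       + GG (Suc n) (int (Suc i) - int n) + GG (Suc n) (int i - int n)"
      by (subst GG_rec) (simp add: algebra_simps)
    then show ?thesis by (simp add: SS_def sum.distrib[symmetric] algebra_simps)
  qed
  also have "\<dots> = SS (Suc i) (j - 1) + SS (Suc i) (j + 1) + SS (Suc i) j + SS i j"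
    using A SS_ext[of "Suc i" "Suc (Suc i)" j] SS_ext[of i "Suc (Suc i)" j] by simp
  finally show ?case using "3.IH" by simp
qed


lemma cc_nonzero:
  assumes "cc n j \<noteq> 0" "j \<ge> 0"
  shows "\<exists>m. 0 \<le> m \<and> int n = j + 2 * m"
proof -
  have ev: "even (int n + j)" and nn: "0 \<le> int n + j"
    and ch: "(n choose nat ((int n + j) div 2)) \<noteq> 0"
    using assms(1) by (auto simp: cc_def split: if_splits)
  have "nat ((int n + j) div 2) \<le> n" using ch by (metis binomial_eq_0 not_le_imp_less)
  from ev obtain k where k: "int n + j = 2 * k" by (rule evenE)
  have "j \<le> int n" using k \<open>nat ((int n + j) div 2) \<le> n\<close> nn by simp
  show ?thesis using k \<open>j \<le> int n\<close> by (intro exI[of _ "k - j"]) auto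
qed

theorem corollary2p5:
  fixes i :: nat and j :: int
  assumes "j \<ge> 0"
  shows "of_int (rhombus i j) =
    (\<Sum>m \<in> {0 .. (int i - j) div 2}.
       of_nat (nat (2 * m + j) choose nat m) * convFib (nat (j + 2 * m + 1)) (nat (int i - j - 2 * m + 1)))"
proof -
  define M where "M = {0 .. (int i - j) div 2}"
  define g where "g m = nat (j + 2 * m)" for m
  define f where "f n = cc n j * GG (Suc n) (int i - int n)" for n
  have tm: "of_nat (nat (2 * m + j) choose nat m) * convFib (nat (j + 2 * m + 1)) (nat (int i - j - 2 * m + 1))
       = f (g m)" if "m \<in> M" for m
  proof -
    have m0: "0 \<le> m" and mle: "j + 2 * m \<le> int i" using that assms unfolding M_def by auto
    have gm: "int (g m) = j + 2 * m" using m0 assms by (simp add: g_def)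
    have c: "cc (g m) j = of_nat (nat (2 * m + j) choose nat m)"
    proof -
      have "(int (g m) + j) div 2 = j + m" using gm by simp
      moreover have "(g m choose nat (j + m)) = (nat (2 * m + j) choose nat m)"
      proof -
        have "nat (j + m) \<le> g m" using gm m0 assms by linarith
        then have "(g m choose nat (j + m)) = (g m choose (g m - nat (j + m)))"
          by (rule binomial_symmetric)
        moreover have "g m - nat (j + m) = nat m" using gm m0 assms by linarith
        moreover have "g m = nat (2 * m + j)" by (simp add: g_def add.commute)
        ultimately show ?thesis by simp
      qed
      ultimately show ?thesis using gm assms m0 by (simp add: cc_def)
    qed
    have G: "convFib (nat (j + 2 * m + 1)) (nat (int i - j - 2 * m + 1)) = GG (Suc (g m)) (int i - int (g m))"
    proof -
      have "nat (j + 2 * m + 1) = Suc (g m)" using gm m0 assms by linarith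
      moreover have "nat (int i - j - 2 * m + 1) - 1 = nat (int i - int (g m))" using gm mle by linarith
      ultimately show ?thesis using mle gm by (simp add: convFib_def GG_def DD_def)
    qed
    show ?thesis unfolding f_def c G ..
  qed
  have inj: "inj_on g M"
    unfolding M_def g_def inj_on_def using assms by auto
  have "(\<Sum>m \<in> M. of_nat (nat (2 * m + j) choose nat m) * convFib (nat (j + 2 * m + 1)) (nat (int i - j - 2 * m + 1)))
      = (\<Sum>m\<in>M. f (g m))" using tm by (rule sum.cong[OF refl])
  also have "\<dots> = (\<Sum>n\<in>g ` M. f n)" using sum.reindex[OF inj, of f] by simp
  also have "\<dots> = (\<Sum>n\<le>i. f n)"
  proof (rule sum.mono_neutral_left)
    show "g ` M \<subseteq> {..i}" unfolding M_def g_def using assms by auto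
    show "\<forall>n\<in>{..i} - g ` M. f n = 0"
    proof
      fix n assume n: "n \<in> {..i} - g ` M"
      show "f n = 0"
      proof (rule ccontr)
        assume "f n \<noteq> 0"
        then have "cc n j \<noteq> 0" by (auto simp: f_def)
        then obtain m where m: "0 \<le> m" "int n = j + 2 * m" using cc_nonzero assms by blast
        have "2 * m \<le> int i - j" using m n by auto
        then have "m \<le> (int i - j) div 2" by linarith
        then have "m \<in> M" using m unfolding M_def by auto
        moreover have "g m = n" using m by (simp add: g_def)
        ultimately show False using n by auto
      qed
    qed
  qed simp
  also have "\<dots> = of_int (rhombus i j)" using rhombus_SS by (simp add: SS_def f_def)
  finally show ?thesis unfolding M_def by simp
qed

end
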